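(* Let $B$ be a unital $C^*$-algebra with a $*$-isomorphism $\psi:B\to M_n\otimes B$ satisfying $\psi(1)=I_n\otimes1$, let $A$ be a maximal abelian $*$-subalgebra of $B$, and let $\phi:A\to\mathbb{C}$ be a unital algebra homomorphism extended to a positive contraction $\phi:B\to\mathbb{C}$. If $\sigma_1(A)\subset A$, then $\phi_{m+1}(A)\subset M_n\otimes\phi_m(A)$ for all $m\ge1$.
   Context: $M_n=M_n(\mathbb{C})$, identity $I_n$. Define $\psi_0=\mathrm{id}_B$, $\psi_{m+1}=(\mathrm{id}^{\otimes m}\otimes\psi)\circ\psi_m:B\to M_n^{\otimes(m+1)}\otimes B$. With $f(b)=I_n\otimes b$, $\sigma_1=\psi^{-1}\circ f:B\to B$. For $m\ge1$, $\phi_m=(\mathrm{id}^{\otimes m}\otimes\phi)\circ\psi_m:B\to M_n^{\otimes m}$. *)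

theory Defs
  imports "HOL-Analysis.Analysis"
begin

locale unital_cstar_algebra =
  fixes sc :: "complex \<Rightarrow> 'b::{real_normed_algebra_1, banach} \<Rightarrow> 'b"
    and st :: "'b \<Rightarrow> 'b"
  assumes sc_add_left: "sc (a + b) x = sc a x + sc b x"
    and sc_add_right: "sc a (x + y) = sc a x + sc a y"
    and sc_sc: "sc a (sc b x) = sc (a * b) x"
    and sc_one: "sc 1 x = x"
    and sc_of_real: "sc (complex_of_real r) x = scaleR r x"
    and sc_mult_left: "sc a x * y = sc a (x * y)"
    and sc_mult_right: "x * sc a y = sc a (x * y)"
    and norm_sc: "norm (sc a x) = cmod a * norm x"
    and st_st: "st (st x) = x"
    and st_add: "st (x + y) = st x + st y"
    and st_sc: "st (sc a x) = sc (cnj a) (st x)"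
    and st_mult: "st (x * y) = st y * st x"
    and cstar_identity: "norm (st x * x) = (norm x)^2"

definition star_subalgebra ::
  "(complex \<Rightarrow> 'b \<Rightarrow> 'b) \<Rightarrow> ('b \<Rightarrow> 'b) \<Rightarrow> 'b::ring set \<Rightarrow> bool" where
  "star_subalgebra sc st A \<longleftrightarrow> 0 \<in> A \<and>
     (\<forall>x\<in>A. \<forall>y\<in>A. x + y \<in> A \<and> x * y \<in> A) \<and>
     (\<forall>a. \<forall>x\<in>A. sc a x \<in> A) \<and> (\<forall>x\<in>A. st x \<in> A)"

definition abelian_star_subalgebra ::
  "(complex \<Rightarrow> 'b \<Rightarrow> 'b) \<Rightarrow> ('b \<Rightarrow> 'b) \<Rightarrow> 'b::ring set \<Rightarrow> bool" where
  "abelian_star_subalgebra sc st A \<longleftrightarrow> star_subalgebra sc st A \<and>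
     (\<forall>x\<in>A. \<forall>y\<in>A. x * y = y * x)"

definition maximal_abelian_star_subalgebra ::
  "(complex \<Rightarrow> 'b \<Rightarrow> 'b) \<Rightarrow> ('b \<Rightarrow> 'b) \<Rightarrow> 'b::ring set \<Rightarrow> bool" where
  "maximal_abelian_star_subalgebra sc st A \<longleftrightarrow> abelian_star_subalgebra sc st A \<and>
     (\<forall>A'. A \<subseteq> A' \<and> abelian_star_subalgebra sc st A' \<longrightarrow> A' = A)"

text \<open>M_n \<otimes> B is identified with n x n matrices over B, indexed by a finite type 'n
with n = CARD('n).  The matrix X corresponds to the sum of e_ij \<otimes> X i j.\<close>

definition mat_mult :: "('n::finite \<Rightarrow> 'n \<Rightarrow> 'b::ring) \<Rightarrow> ('n \<Rightarrow> 'n \<Rightarrow> 'b) \<Rightarrow> 'n \<Rightarrow> 'n \<Rightarrow> 'b" where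
  "mat_mult X Y = (\<lambda>i j. \<Sum>k\<in>UNIV. X i k * Y k j)"

definition mat_star :: "('b \<Rightarrow> 'b) \<Rightarrow> ('n \<Rightarrow> 'n \<Rightarrow> 'b) \<Rightarrow> 'n \<Rightarrow> 'n \<Rightarrow> 'b" where
  "mat_star st X = (\<lambda>i j. st (X j i))"

definition id_tensor :: "'b::zero \<Rightarrow> 'n \<Rightarrow> 'n \<Rightarrow> 'b" where
  "id_tensor b = (\<lambda>i j. if i = j then b else 0)"

definition star_isomorphism ::
  "(complex \<Rightarrow> 'b \<Rightarrow> 'b) \<Rightarrow> ('b \<Rightarrow> 'b) \<Rightarrow> ('b::ring \<Rightarrow> 'n::finite \<Rightarrow> 'n \<Rightarrow> 'b) \<Rightarrow> bool" where
  "star_isomorphism sc st \<psi> \<longleftrightarrow> bij \<psi> \<and>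
     (\<forall>x y. \<psi> (x + y) = (\<lambda>i j. \<psi> x i j + \<psi> y i j)) \<and>
     (\<forall>a x. \<psi> (sc a x) = (\<lambda>i j. sc a (\<psi> x i j))) \<and>
     (\<forall>x y. \<psi> (x * y) = mat_mult (\<psi> x) (\<psi> y)) \<and>
     (\<forall>x. \<psi> (st x) = mat_star st (\<psi> x))"

text \<open>M_n^{\<otimes>m} \<otimes> B is identified with functions on pairs of index lists (of length m):
F corresponds to the sum over I, J of e_{I_1 J_1} \<otimes> ... \<otimes> e_{I_m J_m} \<otimes> F I J.
Entries at index lists of other lengths are 0.  M_n^{\<otimes>m} is the case B = \<complex>.\<close>

text \<open>id^{\<otimes>m} \<otimes> \<psi> : the new M_n factor is placed last (just before B).\<close>
definition tensor_id_map ::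
  "('b \<Rightarrow> 'n \<Rightarrow> 'n \<Rightarrow> 'b) \<Rightarrow> ('n list \<Rightarrow> 'n list \<Rightarrow> 'b) \<Rightarrow> 'n list \<Rightarrow> 'n list \<Rightarrow> 'b::zero" where
  "tensor_id_map \<psi> F = (\<lambda>I J. if I \<noteq> [] \<and> J \<noteq> []
      then \<psi> (F (butlast I) (butlast J)) (last I) (last J) else 0)"

fun psi_iter :: "('b \<Rightarrow> 'n \<Rightarrow> 'n \<Rightarrow> 'b) \<Rightarrow> nat \<Rightarrow> 'b \<Rightarrow> 'n list \<Rightarrow> 'n list \<Rightarrow> 'b::zero" where
  "psi_iter \<psi> 0 b = (\<lambda>I J. if I = [] \<and> J = [] then b else 0)"
| "psi_iter \<psi> (Suc m) b = tensor_id_map \<psi> (psi_iter \<psi> m b)"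

definition phi_iter ::
  "('b::zero \<Rightarrow> 'n \<Rightarrow> 'n \<Rightarrow> 'b) \<Rightarrow> ('b \<Rightarrow> complex) \<Rightarrow> nat \<Rightarrow> 'b \<Rightarrow> 'n list \<Rightarrow> 'n list \<Rightarrow> complex" where
  "phi_iter \<psi> \<phi> m b = (\<lambda>I J. \<phi> (psi_iter \<psi> m b I J))"

definition sigma1 :: "('b \<Rightarrow> 'n \<Rightarrow> 'n \<Rightarrow> 'b) \<Rightarrow> 'b \<Rightarrow> 'b::zero" where
  "sigma1 \<psi> b = inv \<psi> (id_tensor b)"

text \<open>M_n \<otimes> S inside M_n^{\<otimes>(m+1)}, for S a set of elements of M_n^{\<otimes>m}:
the elements sum over i j of e_ij \<otimes> X i j with all X i j \<in> S (the new factor is first).\<close>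
definition kron_left :: "('n \<Rightarrow> 'n \<Rightarrow> ('n list \<Rightarrow> 'n list \<Rightarrow> 'c)) \<Rightarrow> 'n list \<Rightarrow> 'n list \<Rightarrow> 'c::zero" where
  "kron_left X = (\<lambda>I J. if I \<noteq> [] \<and> J \<noteq> [] then X (hd I) (hd J) (tl I) (tl J) else 0)"

definition Mn_tensor :: "('n list \<Rightarrow> 'n list \<Rightarrow> 'c::zero) set \<Rightarrow> ('n list \<Rightarrow> 'n list \<Rightarrow> 'c) set" where
  "Mn_tensor S = {kron_left X | X. \<forall>i j. X i j \<in> S}"

definition complex_linear_functional ::
  "(complex \<Rightarrow> 'b \<Rightarrow> 'b) \<Rightarrow> ('b::plus \<Rightarrow> complex) \<Rightarrow> bool" where
  "complex_linear_functional sc \<phi> \<longleftrightarrow>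
     (\<forall>x y. \<phi> (x + y) = \<phi> x + \<phi> y) \<and> (\<forall>a x. \<phi> (sc a x) = a * \<phi> x)"

definition positive_contraction ::
  "(complex \<Rightarrow> 'b \<Rightarrow> 'b) \<Rightarrow> ('b \<Rightarrow> 'b) \<Rightarrow> ('b::real_normed_algebra \<Rightarrow> complex) \<Rightarrow> bool" where
  "positive_contraction sc st \<phi> \<longleftrightarrow> complex_linear_functional sc \<phi> \<and>
     (\<forall>x. Im (\<phi> (st x * x)) = 0 \<and> 0 \<le> Re (\<phi> (st x * x))) \<and>
     (\<forall>x. cmod (\<phi> x) \<le> norm x)"

end

theory Submission
  imports Defs
begin

lemma psi_zero:
  assumes "star_isomorphism sc st (\<psi> :: 'b::ring \<Rightarrow> 'n::finite \<Rightarrow> 'n \<Rightarrow> 'b)"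
  shows "\<psi> 0 i j = 0"
proof -
  have "\<psi> (0 + 0) = (\<lambda>i j. \<psi> 0 i j + \<psi> 0 i j)" using assms unfolding star_isomorphism_def by blast
  then have "\<psi> 0 i j = \<psi> 0 i j + \<psi> 0 i j" by (metis add_0)
  then show ?thesis by simp
qed

lemma psi_iter_Suc_left:
  assumes "star_isomorphism sc st (\<psi> :: 'b::ring \<Rightarrow> 'n::finite \<Rightarrow> 'n \<Rightarrow> 'b)"
  shows "psi_iter \<psi> (Suc m) b I J = (if I \<noteq> [] \<and> J \<noteq> []
     then psi_iter \<psi> m (\<psi> b (hd I) (hd J)) (tl I) (tl J) else 0)"
proof (induction m arbitrary: b I J)
  case 0
  show ?case
  proof (cases "I \<noteq> [] \<and> J \<noteq> []")
    case True
    then obtain i I' j J' where IJ: "I = i # I'" "J = j # J'" by (meson neq_Nil_conv)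
    show ?thesis using IJ psi_zero[OF assms]
      by (auto simp: tensor_id_map_def)
  next
    case False
    then show ?thesis by (auto simp: tensor_id_map_def)
  qed
next
  case (Suc m)
  show ?case
  proof (cases "I \<noteq> [] \<and> J \<noteq> []")
    case True
    then obtain i I' j J' where IJ: "I = i # I'" "J = j # J'" by (meson neq_Nil_conv)
    show ?thesis
    proof (cases "I' \<noteq> [] \<and> J' \<noteq> []")
      case True
      then have ne: "butlast I \<noteq> [] \<and> butlast J \<noteq> []" "hd (butlast I) = i" "hd (butlast J) = j"
          "tl (butlast I) = butlast I'" "tl (butlast J) = butlast J'"
          "last I = last I'" "last J = last J'"
        using IJ by auto
      have "psi_iter \<psi> (Suc (Suc m)) b I J
          = \<psi> (psi_iter \<psi> (Suc m) b (butlast I) (butlast J)) (last I) (last J)"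
        using IJ by (simp add: tensor_id_map_def del: psi_iter.simps(1))
      also have "\<dots> = \<psi> (psi_iter \<psi> m (\<psi> b i j) (butlast I') (butlast J')) (last I') (last J')"
        by (subst Suc.IH) (simp only: ne not_False_eq_True conj_absorb if_True)
      also have "\<dots> = psi_iter \<psi> (Suc m) (\<psi> b i j) I' J'"
        using True by (simp add: tensor_id_map_def del: psi_iter.simps(1))
      finally show ?thesis using IJ by simp
    next
      case False
      then show ?thesis using IJ Suc.IH psi_zero[OF assms]
        by (auto simp: tensor_id_map_def)
    qed
  next
    case False
    then show ?thesis by (auto simp: tensor_id_map_def)
  qed
qed

lemma selfadj_in_masa:
  assumes cs: "unital_cstar_algebra sc st"
    and M: "maximal_abelian_star_subalgebra sc st A"
    and hs: "st h = h"
    and hc: "\<forall>a\<in>A. h * a = a * h"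
  shows "h \<in> A"
proof -
  interpret unital_cstar_algebra sc st by (fact cs)
  have SA: "star_subalgebra sc st A" and AB: "\<forall>x\<in>A. \<forall>y\<in>A. x * y = y * x"
    using M unfolding maximal_abelian_star_subalgebra_def abelian_star_subalgebra_def by auto
  define T where "T = insert h A"
  define C where "C = {y. \<forall>t\<in>T. y * t = t * y}"
  define D where "D = {y. \<forall>u\<in>C. y * u = u * y}"
  have Tst: "\<forall>t\<in>T. st t \<in> T" using SA hs unfolding T_def star_subalgebra_def by auto
  have TC: "T \<subseteq> C" using AB hc unfolding T_def C_def by auto
  have Cst: "st u \<in> C" if "u \<in> C" for u
  proof -
    { fix t assume t: "t \<in> T"
      then have "st t * u = u * st t" using that Tst unfolding C_def by auto
      then have "st (st t * u) = st (u * st t)" by simp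
      then have "st u * t = t * st u" by (simp add: st_mult st_st) }
    then show ?thesis unfolding C_def by auto
  qed
  have DC: "D \<subseteq> C" using TC unfolding D_def C_def by auto
  have "abelian_star_subalgebra sc st D"
    unfolding abelian_star_subalgebra_def star_subalgebra_def
  proof (intro conjI ballI allI)
    show "0 \<in> D" unfolding D_def by auto
  next
    fix x y assume "x \<in> D" "y \<in> D"
    then show "x + y \<in> D" unfolding D_def by (auto simp: distrib_left distrib_right)
  next
    fix x y assume x: "x \<in> D" and y: "y \<in> D"
    { fix u assume u: "u \<in> C"
      have xu: "x * u = u * x" and yu: "y * u = u * y" using x y u unfolding D_def by auto
      have "x * y * u = x * (u * y)" by (simp add: mult.assoc yu)
      also have "\<dots> = u * (x * y)" by (simp add: mult.assoc[symmetric] xu)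
      finally have "x * y * u = u * (x * y)" . }
    then show "x * y \<in> D" unfolding D_def by auto
  next
    fix a x assume x: "x \<in> D"
    { fix u assume "u \<in> C"
      then have "sc a x * u = u * sc a x" using x unfolding D_def
        by (simp add: sc_mult_left sc_mult_right) }
    then show "sc a x \<in> D" unfolding D_def by auto
  next
    fix x assume x: "x \<in> D"
    { fix u assume u: "u \<in> C"
      then have "st u * x = x * st u" using x Cst unfolding D_def by auto
      then have "st (st u * x) = st (x * st u)" by simp
      then have "st x * u = u * st x" by (simp add: st_mult st_st) }
    then show "st x \<in> D" unfolding D_def by auto
  next
    fix x y assume x: "x \<in> D" and y: "y \<in> D"
    then have "y \<in> C" using DC by auto
    then show "x * y = y * x" using x unfolding D_def by auto
  qed
  moreover have "A \<subseteq> D" "h \<in> D" unfolding D_def C_def T_def by auto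
  ultimately have "D = A" using M unfolding maximal_abelian_star_subalgebra_def by blast
  with \<open>h \<in> D\<close> show ?thesis by simp
qed

lemma comm_in_masa:
  assumes cs: "unital_cstar_algebra sc st"
    and M: "maximal_abelian_star_subalgebra sc st A"
    and xc: "\<forall>a\<in>A. x * a = a * x"
  shows "x \<in> A"
proof -
  interpret unital_cstar_algebra sc st by (fact cs)
  have SA: "star_subalgebra sc st A"
    using M unfolding maximal_abelian_star_subalgebra_def abelian_star_subalgebra_def by auto
  have sxc: "\<forall>a\<in>A. st x * a = a * st x"
  proof
    fix a assume a: "a \<in> A"
    then have "st a \<in> A" using SA unfolding star_subalgebra_def by auto
    then have "st a * x = x * st a" using xc by auto
    then have "st (st a * x) = st (x * st a)" by simp
    then show "st x * a = a * st x" by (simp add: st_mult st_st)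
  qed
  define h where "h = x + st x"
  define k where "k = sc \<i> x + sc (- \<i>) (st x)"
  have hA: "h \<in> A"
    apply (rule selfadj_in_masa[OF cs M])
    using xc sxc by (auto simp: h_def st_add st_st add.commute distrib_left distrib_right)
  have kA: "k \<in> A"
    apply (rule selfadj_in_masa[OF cs M])
    using xc sxc by (auto simp: k_def st_add st_st st_sc add.commute distrib_left distrib_right
        sc_mult_left sc_mult_right)
  have sc0: "sc 0 y = 0" for y using sc_of_real[of 0 y] by simp
  have "sc (1/2) h + sc (- \<i>/2) k = x"
  proof -
    have "sc (1/2) h + sc (- \<i>/2) k
        = (sc (1/2) x + sc (1/2) x) + (sc (1/2) (st x) + sc (-1/2) (st x))"
      by (simp add: h_def k_def sc_add_right sc_sc algebra_simps)
    also have "\<dots> = sc 1 x + sc 0 (st x)"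
      by (simp flip: sc_add_left)
    finally show ?thesis by (simp add: sc_one sc0)
  qed
  moreover have "sc (1/2) h + sc (- \<i>/2) k \<in> A"
    using hA kA SA unfolding star_subalgebra_def by auto
  ultimately show ?thesis by simp
qed

theorem proposition3p6:
  fixes sc :: "complex \<Rightarrow> 'b::{real_normed_algebra_1, banach} \<Rightarrow> 'b"
    and st :: "'b \<Rightarrow> 'b"
    and \<psi> :: "'b \<Rightarrow> 'n::finite \<Rightarrow> 'n \<Rightarrow> 'b"
    and A :: "'b set"
    and \<phi> :: "'b \<Rightarrow> complex"
  assumes "unital_cstar_algebra sc st"
    and "star_isomorphism sc st \<psi>"
    and "\<psi> 1 = id_tensor 1"
    and "maximal_abelian_star_subalgebra sc st A"
    and "\<phi> 1 = 1"
    and "\<forall>a\<in>A. \<forall>b\<in>A. \<phi> (a * b) = \<phi> a * \<phi> b"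
    and "positive_contraction sc st \<phi>"
    and "sigma1 \<psi> ` A \<subseteq> A"
  shows "\<forall>m\<ge>1. phi_iter \<psi> \<phi> (m + 1) ` A \<subseteq> Mn_tensor (phi_iter \<psi> \<phi> m ` A)"
proof -
  note cs = assms(1) and iso = assms(2) and M = assms(4)
  have bij: "bij \<psi>" and mult: "\<forall>x y. \<psi> (x * y) = mat_mult (\<psi> x) (\<psi> y)"
    using iso unfolding star_isomorphism_def by auto
  have AB: "\<forall>x\<in>A. \<forall>y\<in>A. x * y = y * x"
    using M unfolding maximal_abelian_star_subalgebra_def abelian_star_subalgebra_def by auto
  have phi0: "\<phi> 0 = 0"
  proof -
    have "\<phi> (0 + 0) = \<phi> 0 + \<phi> 0" using assms(7)
      unfolding positive_contraction_def complex_linear_functional_def by blast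
    then show ?thesis by simp
  qed
  have entryA: "\<psi> a i j \<in> A" if a: "a \<in> A" for a i j
  proof (rule comm_in_masa[OF cs M], intro ballI)
    fix b assume b: "b \<in> A"
    define c where "c = sigma1 \<psi> b"
    have cA: "c \<in> A" using assms(8) b unfolding c_def by auto
    have pc: "\<psi> c = id_tensor b" unfolding c_def sigma1_def
      using bij by (simp add: bij_is_surj surj_f_inv_f)
    have "\<psi> (a * c) = \<psi> (c * a)" using AB a cA by metis
    then have "mat_mult (\<psi> a) (id_tensor b) = mat_mult (id_tensor b) (\<psi> a)"
      using mult pc by metis
    then have "mat_mult (\<psi> a) (id_tensor b) i j = mat_mult (id_tensor b) (\<psi> a) i j" by simp
    moreover have "mat_mult (\<psi> a) (id_tensor b) i j = \<psi> a i j * b"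
      unfolding mat_mult_def id_tensor_def
      by (simp add: if_distrib[where f="\<lambda>z. _ * z"] cong: if_cong)
    moreover have "mat_mult (id_tensor b) (\<psi> a) i j = b * \<psi> a i j"
      unfolding mat_mult_def id_tensor_def
      by (simp add: if_distrib[where f="\<lambda>z. z * _"] cong: if_cong)
    ultimately show "\<psi> a i j * b = b * \<psi> a i j" by simp
  qed
  have "phi_iter \<psi> \<phi> (m + 1) a \<in> Mn_tensor (phi_iter \<psi> \<phi> m ` A)" if a: "a \<in> A" for m a
  proof -
    have "phi_iter \<psi> \<phi> (m + 1) a = kron_left (\<lambda>i j. phi_iter \<psi> \<phi> m (\<psi> a i j))"
      by (auto simp: fun_eq_iff phi_iter_def kron_left_def psi_iter_Suc_left[OF iso] phi0
          simp del: psi_iter.simps)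
    moreover have "\<forall>i j. phi_iter \<psi> \<phi> m (\<psi> a i j) \<in> phi_iter \<psi> \<phi> m ` A"
      using entryA a by auto
    ultimately show ?thesis unfolding Mn_tensor_def by blast
  qed
  then show ?thesis by auto
qed

end
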